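(* Let $R>0$, $\mathcal{D}=\{x\in\mathbb{R}^2:|x|<R\}$, and let $f$ be a $C^\infty$ function with $\operatorname{supp}f\subset\mathcal{D}$. Let $(Mf)(\xi,t)=\frac{1}{2\pi}\int_{S^1}f(\xi-t\theta)\,d\theta$ and $(I_*f)(x)=\frac{1}{2\pi}\int_{\mathcal{D}}f(y)\log|x-y|\,dy$. Then for $x\in\mathcal{D}$, $$(I_*f)(x)=\frac{1}{2\pi R}\int_{\partial\mathcal{D}}\int_0^{2R}(Mf)(\xi,t)\log\big|t^2-|x-\xi|^2\big|\,t\,dt\,d\xi+c_f,\qquad c_f=-\frac{\log R}{2\pi}\int_{\mathcal{D}}f(y)\,dy.$$
   Context: $d\theta$ and $d\xi$ denote arc-length measure on the unit circle $S^1$ and on the circle $\partial\mathcal{D}$, respectively. *)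

theory Defs
  imports "HOL-Analysis.Analysis"
begin

fun Ck :: "nat \<Rightarrow> ('a::euclidean_space \<Rightarrow> real) \<Rightarrow> bool" where
  "Ck 0 g = continuous_on UNIV g"
| "Ck (Suc k) g = (continuous_on UNIV g \<and> (\<forall>x. g differentiable (at x)) \<and>
      (\<forall>i\<in>Basis. Ck k (\<lambda>x. frechet_derivative g (at x) i)))"

definition smooth_fun :: "('a::euclidean_space \<Rightarrow> real) \<Rightarrow> bool" where
  "smooth_fun g \<longleftrightarrow> (\<forall>k. Ck k g)"

definition circ :: "real \<Rightarrow> real^2" where
  "circ s = vector [cos s, sin s]"

definition sph_mean :: "(real^2 \<Rightarrow> real) \<Rightarrow> real^2 \<Rightarrow> real \<Rightarrow> real" where
  "sph_mean f \<xi> t = (1 / (2 * pi)) * (LBINT s=0..2*pi. f (\<xi> - t *\<^sub>R circ s))"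

definition log_pot :: "real \<Rightarrow> (real^2 \<Rightarrow> real) \<Rightarrow> real^2 \<Rightarrow> real" where
  "log_pot R f x = (1 / (2 * pi)) * (LINT y:ball 0 R|lborel. f y * ln (norm (x - y)))"

end

theory Submission
  imports Defs "HOL-Real_Asymp.Real_Asymp"
begin

lemma ln_integrable_01: "set_integrable lborel {0<..<1::real} (\<lambda>x. - ln x)"
proof -
  have "set_integrable lborel (einterval 0 1) (\<lambda>x. - ln x)"
  proof (rule interval_integral_FTC_nonneg(1)[where F="\<lambda>x. x - x * ln x" and A=0 and B=1])
    show "(0::ereal) < 1" by simp
    show "\<And>x. 0 < ereal x \<Longrightarrow> ereal x < 1 \<Longrightarrow> ((\<lambda>x. x - x * ln x) has_real_derivative - ln x) (at x)"
      by (auto intro!: derivative_eq_intros)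
    show "\<And>x. 0 < ereal x \<Longrightarrow> ereal x < 1 \<Longrightarrow> isCont (\<lambda>x. - ln x) x"
      by (auto intro!: continuous_intros)
    show "AE x in lborel. 0 < ereal x \<longrightarrow> ereal x < 1 \<longrightarrow> 0 \<le> - ln x"
      by (auto)
    have "((\<lambda>x::real. x - x * ln x) \<longlongrightarrow> 0) (at_right 0)" by real_asymp
    then show "(((\<lambda>x. x - x * ln x) \<circ> real_of_ereal) \<longlongrightarrow> 0) (at_right 0)"
      by (simp add: zero_ereal_def ereal_tendsto_simps)
    have "((\<lambda>x::real. x - x * ln x) \<longlongrightarrow> 1) (at_left 1)" by real_asymp
    then show "(((\<lambda>x. x - x * ln x) \<circ> real_of_ereal) \<longlongrightarrow> 1) (at_left 1)"
      by (simp add: one_ereal_def ereal_tendsto_simps)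
  qed
  then show ?thesis by (simp add: zero_ereal_def one_ereal_def)
qed

lemma int_eq: "integrable M f \<Longrightarrow> (\<And>x. f x = g x) \<Longrightarrow> integrable M g"
proof -
  assume "integrable M f" "\<And>x. f x = g x"
  then show ?thesis using ext[of f g] by simp
qed

lemma ind_mult_integrable_iff: "set_integrable lborel A f \<longleftrightarrow> integrable lborel (\<lambda>x. indicator A x * (f x::real))"
  by (simp add: set_integrable_def)

lemma ln_int_0a:
  assumes "0 < a"
  shows "integrable lborel (\<lambda>x. indicator {0<..<a} x * ln (x::real))"
proof -
  have i1: "integrable lborel (\<lambda>x. indicator {0<..<1} x * ln (x::real))"
    using integrable_minus[OF ln_integrable_01[unfolded set_integrable_def]] by simp
  have i2: "integrable lborel (\<lambda>x. indicator {1/2..max a 1} x * ln (x::real))"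
  proof -
    have "continuous_on {1/2..max a 1} (\<lambda>x::real. ln x)" by (intro continuous_intros) auto
    then show ?thesis using borel_integrable_compact[of "{1/2..max a 1}" ln] unfolding set_integrable_def
      by auto
  qed
  have "integrable lborel (\<lambda>x. indicator {0<..<1} x * ln (x::real) + indicator {1/2..max a 1} x * ln x)"
    using i1 i2 by simp
  then show ?thesis
  proof (rule Bochner_Integration.integrable_bound)
    show "AE x in lborel. norm (indicator {0<..<a} x * ln x) \<le> norm (indicator {0<..<1} x * ln (x::real) + indicator {1/2..max a 1} x * ln x)"
    proof (rule AE_I2)
      fix x :: real
      show "norm (indicator {0<..<a} x * ln x) \<le> norm (indicator {0<..<1} x * ln (x::real) + indicator {1/2..max a 1} x * ln x)"
        by (cases "x < 1/2"; cases "x < 1"; cases "0 < x"; cases "x < a"; simp add: indicator_def abs_mult)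
    qed
  qed simp
qed

lemma sin_ge_half: assumes "0 \<le> (x::real)" "x \<le> 1" shows "x / 2 \<le> sin x"
proof (cases "x = 0")
  case False
  then have "0 < x" using assms by (auto simp: less_le)
  from MVT2[of 0 x sin cos] this obtain z where z: "0 < z" "z < x" "sin x - sin 0 = (x - 0) * cos z"
    by (auto intro: DERIV_sin)
  have "1 \<le> pi / 3" using pi_gt3 by simp
  then have "cos (pi/3) \<le> cos z"
    using z assms by (intro cos_monotone_0_pi_le) auto
  then have "1/2 \<le> cos z" by (simp add: cos_60)
  then show ?thesis using z \<open>0 < x\<close> by (simp add: mult_left_mono[of "1/2" "cos z" x] )
qed simp

lemma lnsin_int_01: "integrable lborel (\<lambda>x. indicator {0<..<1} x * ln \<bar>sin (x::real)\<bar>)"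
proof -
  have "integrable lborel (\<lambda>x. indicator {0<..<1} x * (ln 2 - ln (x::real)))"
  proof -
    have "integrable lborel (\<lambda>x. indicator {0<..<1} x * ln 2 - indicator {0<..<1} x * ln (x::real))"
      using ln_int_0a[of 1] by (intro Bochner_Integration.integrable_diff) (auto intro!: integrable_real_mult_indicator)
    then show ?thesis by (simp add: algebra_simps)
  qed
  then show ?thesis
  proof (rule Bochner_Integration.integrable_bound)
    show "AE x in lborel. norm (indicator {0<..<1} x * ln \<bar>sin x\<bar>) \<le> norm (indicator {0<..<1} x * (ln 2 - ln (x::real)))"
    proof (rule AE_I2)
      fix x :: real
      show "norm (indicator {0<..<1} x * ln \<bar>sin x\<bar>) \<le> norm (indicator {0<..<1} x * (ln 2 - ln (x::real)))"
      proof (cases "x \<in> {0<..<1}")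
        case True
        then have x: "0 < x" "x < 1" by auto
        have s: "x / 2 \<le> sin x" using sin_ge_half[of x] x by simp
        have sp: "0 < sin x" using s x by simp
        have s1: "sin x \<le> 1" by simp
        have "ln (x/2) \<le> ln (sin x)" using s x by (subst ln_le_cancel_iff) auto
        moreover have "ln (sin x) \<le> 0" using sp s1 by simp
        moreover have "ln (x/2) = ln x - ln 2" using x by (simp add: ln_div)
        moreover have "ln x < 0" using x by simp
        moreover have "0 < ln (2::real)" by simp
        ultimately have "\<bar>ln \<bar>sin x\<bar>\<bar> \<le> \<bar>ln 2 - ln x\<bar>" using sp by simp
        then show ?thesis using True by (simp add: abs_mult)
      qed simp
    qed
  qed simp
qed

lemma lnsin_int_0pi: "integrable lborel (\<lambda>x. indicator {0<..<pi} x * ln \<bar>sin (x::real)\<bar>)"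
proof -
  note i1 = lnsin_int_01
  have i3: "integrable lborel (\<lambda>x. indicator {0<..<1} (pi + (-1) * x) * ln \<bar>sin (pi + (-1) * x)\<bar>)"
    using lborel_integrable_real_affine[OF lnsin_int_01, of "-1" pi] by simp
  have i3': "integrable lborel (\<lambda>x. indicator {pi-1<..<pi} x * ln \<bar>sin x\<bar>)"
    by (rule int_eq[OF i3]) (auto simp: indicator_def)
  have "continuous_on {1..pi-1} (\<lambda>x::real. ln \<bar>sin x\<bar>)"
  proof (intro continuous_intros ballI)
    fix x assume "x \<in> {1..pi-1::real}"
    then have "0 < sin x" by (intro sin_gt_zero) auto
    then show "\<bar>sin x\<bar> \<noteq> 0" by simp
  qed
  then have i2: "integrable lborel (\<lambda>x. indicator {1..pi-1} x * ln \<bar>sin (x::real)\<bar>)"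
    using borel_integrable_compact[of "{1..pi-1}" "\<lambda>x. ln \<bar>sin x\<bar>"] unfolding set_integrable_def by auto
  have "integrable lborel (\<lambda>x. indicator {0<..<1} x * ln \<bar>sin (x::real)\<bar> + indicator {1..pi-1} x * ln \<bar>sin (x::real)\<bar> + indicator {pi-1<..<pi} x * ln \<bar>sin x\<bar>)"
    using i1 i2 i3' by simp
  then show ?thesis
  proof (rule int_eq)
    fix x :: real
    have "1 < pi - 1" using pi_gt3 by simp
    then show "indicator {0<..<1} x * ln \<bar>sin (x::real)\<bar> + indicator {1..pi-1} x * ln \<bar>sin (x::real)\<bar> + indicator {pi-1<..<pi} x * ln \<bar>sin x\<bar> = indicator {0<..<pi} x * ln \<bar>sin x\<bar>"
      by (cases "x < 1"; cases "x \<le> pi - 1"; cases "0 < x"; cases "x < pi"; cases "x = 1"; simp add: indicator_def)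
  qed
qed

lemma int_ind_sub: "integrable lborel (\<lambda>x. indicator A x * (f x::real)) \<Longrightarrow> B \<subseteq> A \<Longrightarrow> B \<in> sets borel
  \<Longrightarrow> integrable lborel (\<lambda>x. indicator B x * f x)"
proof -
  assume a: "integrable lborel (\<lambda>x. indicator A x * (f x::real))" "B \<subseteq> A" "B \<in> sets borel"
  have "integrable lborel (\<lambda>x. (indicator A x * (f x::real)) * indicator B x)"
    using a by (intro integrable_real_mult_indicator) auto
  then show ?thesis by (rule int_eq) (use a in \<open>auto simp: indicator_def\<close>)
qed

lemma lnsin_integral_0pi: "(LINT x|lborel. indicator {0<..<pi} x * ln \<bar>sin (x::real)\<bar>) = - pi * ln 2"
proof -
  define I where "I = (LINT x|lborel. indicator {0<..<pi} x * ln \<bar>sin (x::real)\<bar>)"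
  define J where "J = (LINT x|lborel. indicator {0<..<pi/2} x * ln \<bar>sin (x::real)\<bar>)"
  define K where "K = (LINT x|lborel. indicator {0<..<pi/2} x * ln \<bar>cos (x::real)\<bar>)"
  have ij: "integrable lborel (\<lambda>x. indicator {0<..<pi/2} x * ln \<bar>sin (x::real)\<bar>)"
    by (rule int_ind_sub[OF lnsin_int_0pi]) auto
  have ij2: "integrable lborel (\<lambda>x. indicator {pi/2<..<pi} x * ln \<bar>sin (x::real)\<bar>)"
    by (rule int_ind_sub[OF lnsin_int_0pi]) auto
  have ik: "integrable lborel (\<lambda>x. indicator {0<..<pi/2} x * ln \<bar>cos (x::real)\<bar>)"
    using lborel_integrable_real_affine[OF ij, of "-1" "pi/2"]
    by (rule int_eq) (auto simp: indicator_def sin_cos_eq)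
  have JK: "J = K"
    unfolding J_def K_def
    by (subst lborel_integral_real_affine[where c="-1" and t="pi/2"])
       (auto intro!: Bochner_Integration.integral_cong simp: indicator_def sin_cos_eq)
  have K2: "(LINT x|lborel. indicator {pi/2<..<pi} x * ln \<bar>sin (x::real)\<bar>) = K"
    unfolding K_def
    by (subst lborel_integral_real_affine[where c="1" and t="pi/2"])
       (auto intro!: Bochner_Integration.integral_cong simp: indicator_def sin_add)
  have IJK: "I = J + K"
  proof -
    have "I = (LINT x|lborel. indicator {0<..<pi/2} x * ln \<bar>sin (x::real)\<bar> + indicator {pi/2<..<pi} x * ln \<bar>sin (x::real)\<bar>)"
      unfolding I_def
    proof (intro Bochner_Integration.integral_cong refl)
      fix x :: real
      show "indicator {0<..<pi} x * ln \<bar>sin (x::real)\<bar> = indicator {0<..<pi/2} x * ln \<bar>sin (x::real)\<bar> + indicator {pi/2<..<pi} x * ln \<bar>sin (x::real)\<bar>"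
      proof (cases "x = pi/2")
        case True then have "sin x = 1" by (simp only: sin_pi_half)
        then show ?thesis by (simp add: indicator_def)
      next
        case False then show ?thesis by (auto simp: indicator_def)
      qed
    qed
    also have "\<dots> = J + K" using ij ij2 K2 by (simp add: J_def)
    finally show ?thesis .
  qed
  have I2: "I = 2 * (LINT y|lborel. indicator {0<..<pi/2} y * ln \<bar>sin (2 * y)\<bar>)"
    unfolding I_def
    by (subst lborel_integral_real_affine[where c="2" and t="0"])
       (auto intro!: Bochner_Integration.integral_cong simp: indicator_def)
  have "(LINT y|lborel. indicator {0<..<pi/2} y * ln \<bar>sin (2 * y)\<bar>)
      = (LINT y|lborel. indicator {0<..<pi/2} y * ln 2 + (indicator {0<..<pi/2} y * ln \<bar>sin y\<bar> + indicator {0<..<pi/2} y * ln \<bar>cos y\<bar>))"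
  proof (intro Bochner_Integration.integral_cong refl)
    fix y :: real
    show "indicator {0<..<pi/2} y * ln \<bar>sin (2 * y)\<bar> = indicator {0<..<pi/2} y * ln 2 + (indicator {0<..<pi/2} y * ln \<bar>sin y\<bar> + indicator {0<..<pi/2} y * ln \<bar>cos y\<bar>)"
    proof (cases "y \<in> {0<..<pi/2}")
      case True
      then have "0 < sin y" "0 < cos y" by (auto intro!: sin_gt_zero cos_gt_zero)
      then show ?thesis using True by (simp add: sin_double abs_mult ln_mult)
    qed simp
  qed
  also have "\<dots> = pi/2 * ln 2 + (J + K)"
    using ij ik by (simp add: J_def K_def)
  finally have "I = 2 * (pi/2 * ln 2 + (J + K))" using I2 by simp
  then have "I = pi * ln 2 + 2 * I" using IJK by simp
  then have "I = - pi * ln 2" by simp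
  then show ?thesis by (simp add: I_def)
qed

lemma abs_sin_shift_int: "\<bar>sin (x + of_int k * pi)\<bar> = \<bar>sin (x::real)\<bar>"
proof -
  have s: "sin (of_int k * pi) = 0" by (rule sin_zero_iff_int2[THEN iffD2]) blast
  then have "(cos (of_int k * pi))^2 = 1" using sin_cos_squared_add[of "of_int k * pi"] by simp
  then have "\<bar>cos (of_int k * pi)\<bar> = 1"
    unfolding power2_eq_1_iff by auto
  then show ?thesis by (simp add: sin_add s abs_mult)
qed

lemma lnsin_base:
  assumes a: "0 \<le> a" "a < pi"
  shows "integrable lborel (\<lambda>x. indicator {a<..<a+pi} x * ln \<bar>sin (x::real)\<bar>)
    \<and> (LINT x|lborel. indicator {a<..<a+pi} x * ln \<bar>sin (x::real)\<bar>) = - pi * ln 2"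
proof -
  have p1: "integrable lborel (\<lambda>x. indicator {a<..<pi} x * ln \<bar>sin (x::real)\<bar>)"
    by (rule int_ind_sub[OF lnsin_int_0pi]) (use a in auto)
  have p2: "integrable lborel (\<lambda>x. indicator {0<..a} x * ln \<bar>sin (x::real)\<bar>)"
    by (rule int_ind_sub[OF lnsin_int_0pi]) (use a in auto)
  have p3: "integrable lborel (\<lambda>x. indicator {pi<..pi+a} x * ln \<bar>sin (x::real)\<bar>)"
    using lborel_integrable_real_affine[OF p2, of 1 "-pi"]
    by (rule int_eq) (auto simp: indicator_def sin_diff)
  have ae: "AE x in lborel. indicator {a<..<a+pi} x * ln \<bar>sin (x::real)\<bar> =
      indicator {a<..<pi} x * ln \<bar>sin (x::real)\<bar> + indicator {pi<..pi+a} x * ln \<bar>sin (x::real)\<bar>"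
    using AE_lborel_singleton[of "a+pi"]
  proof eventually_elim
    case (elim x)
    then show ?case using a by (cases "x = pi") (auto simp: indicator_def)
  qed
  have int: "integrable lborel (\<lambda>x. indicator {a<..<a+pi} x * ln \<bar>sin (x::real)\<bar>)"
    using integrable_cong_AE[OF _ _ ae] p1 p3 by simp
  have "(LINT x|lborel. indicator {a<..<a+pi} x * ln \<bar>sin (x::real)\<bar>)
     = (LINT x|lborel. indicator {a<..<pi} x * ln \<bar>sin (x::real)\<bar> + indicator {pi<..pi+a} x * ln \<bar>sin (x::real)\<bar>)"
    using ae by (intro integral_cong_AE) auto
  also have "\<dots> = (LINT x|lborel. indicator {a<..<pi} x * ln \<bar>sin (x::real)\<bar>) + (LINT x|lborel. indicator {pi<..pi+a} x * ln \<bar>sin (x::real)\<bar>)"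
    using p1 p3 by simp
  also have "(LINT x|lborel. indicator {pi<..pi+a} x * ln \<bar>sin (x::real)\<bar>) = (LINT x|lborel. indicator {0<..a} x * ln \<bar>sin (x::real)\<bar>)"
    by (subst lborel_integral_real_affine[where c="1" and t="pi"])
       (auto intro!: Bochner_Integration.integral_cong simp: indicator_def)
  also have "(LINT x|lborel. indicator {a<..<pi} x * ln \<bar>sin (x::real)\<bar>) + (LINT x|lborel. indicator {0<..a} x * ln \<bar>sin (x::real)\<bar>)
     = (LINT x|lborel. indicator {a<..<pi} x * ln \<bar>sin (x::real)\<bar> + indicator {0<..a} x * ln \<bar>sin (x::real)\<bar>)"
    using p1 p2 by simp
  also have "\<dots> = (LINT x|lborel. indicator {0<..<pi} x * ln \<bar>sin (x::real)\<bar>)"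
    using a by (intro Bochner_Integration.integral_cong) (auto simp: indicator_def)
  finally show ?thesis using int lnsin_integral_0pi by simp
qed


lemma lnsin_any:
  "integrable lborel (\<lambda>x. indicator {a<..<a+pi} x * ln \<bar>sin (x::real)\<bar>)
    \<and> (LINT x|lborel. indicator {a<..<a+pi} x * ln \<bar>sin (x::real)\<bar>) = - pi * ln 2"
proof -
  define k where "k = \<lfloor>a / pi\<rfloor>"
  define a0 where "a0 = a - of_int k * pi"
  have "of_int k \<le> a / pi" "a / pi < of_int k + 1" unfolding k_def by linarith+
  then have "of_int k * pi \<le> a" "a < (of_int k + 1) * pi"
    using pi_gt_zero by (simp_all add: field_simps)
  then have a0: "0 \<le> a0" "a0 < pi" unfolding a0_def by (simp_all add: algebra_simps)
  note B = lnsin_base[OF a0]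
  have eqf: "(\<lambda>y. indicator {a<..<a+pi} (of_int k * pi + 1 * y) * ln \<bar>sin (of_int k * pi + 1 * y)\<bar>)
      = (\<lambda>y. indicator {a0<..<a0+pi} y * ln \<bar>sin (y::real)\<bar>)"
  proof (rule ext)
    fix y :: real
    have "\<bar>sin (of_int k * pi + 1 * y)\<bar> = \<bar>sin y\<bar>" using abs_sin_shift_int[of y k] by (simp add: add.commute)
    moreover have "(of_int k * pi + 1 * y \<in> {a<..<a+pi}) = (y \<in> {a0<..<a0+pi})" by (auto simp: a0_def)
    ultimately show "indicator {a<..<a+pi} (of_int k * pi + 1 * y) * ln \<bar>sin (of_int k * pi + 1 * y)\<bar>
      = indicator {a0<..<a0+pi} y * ln \<bar>sin (y::real)\<bar>" by (simp add: indicator_def)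
  qed
  have "integrable lborel (\<lambda>x. indicator {a<..<a+pi} x * ln \<bar>sin (x::real)\<bar>)"
    using lborel_integrable_real_affine_iff[of 1 "\<lambda>x. indicator {a<..<a+pi} x * ln \<bar>sin (x::real)\<bar>" "of_int k * pi"]
      B eqf by simp
  moreover have "(LINT x|lborel. indicator {a<..<a+pi} x * ln \<bar>sin (x::real)\<bar>) = - pi * ln 2"
    using lborel_integral_real_affine[of 1 "\<lambda>x. indicator {a<..<a+pi} x * ln \<bar>sin (x::real)\<bar>" "of_int k * pi"]
      B eqf by simp
  ultimately show ?thesis by simp
qed

lemma lnsin_half:
  "integrable lborel (\<lambda>s. indicator {0<..<2*pi} s * ln \<bar>sin ((s + c) / 2)\<bar>)
   \<and> (LINT s|lborel. indicator {0<..<2*pi} s * ln \<bar>sin ((s + c) / 2)\<bar>) = - 2 * pi * ln 2"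
proof -
  note L = lnsin_any[of "c/2"]
  have eqf: "(\<lambda>s. indicator {c/2<..<c/2+pi} (c/2 + (1/2) * s) * ln \<bar>sin (c/2 + (1/2) * s)\<bar>)
      = (\<lambda>s. indicator {0<..<2*pi} s * ln \<bar>sin ((s + c) / 2)\<bar>)"
  proof (rule ext)
    fix s :: real
    have "c/2 + (1/2) * s = (s + c) / 2" by simp
    moreover have "((s + c) / 2 \<in> {c/2<..<c/2+pi}) = (s \<in> {0<..<2*pi})" by auto
    ultimately show "indicator {c/2<..<c/2+pi} (c/2 + (1/2) * s) * ln \<bar>sin (c/2 + (1/2) * s)\<bar>
      = indicator {0<..<2*pi} s * ln \<bar>sin ((s + c) / 2)\<bar>" by (simp add: indicator_def add_divide_distrib ac_simps)
  qed
  have "integrable lborel (\<lambda>s. indicator {0<..<2*pi} s * ln \<bar>sin ((s + c) / 2)\<bar>)"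
    using lborel_integrable_real_affine_iff[of "1/2" "\<lambda>x. indicator {c/2<..<c/2+pi} x * ln \<bar>sin (x::real)\<bar>" "c/2"]
      L eqf by simp
  moreover have "(LINT s|lborel. indicator {0<..<2*pi} s * ln \<bar>sin ((s + c) / 2)\<bar>) = - 2 * pi * ln 2"
    using lborel_integral_real_affine[of "1/2" "\<lambda>x. indicator {c/2<..<c/2+pi} x * ln \<bar>sin (x::real)\<bar>" "c/2"]
      L eqf by simp
  ultimately show ?thesis by simp
qed

lemma AE_sin_half_nz: "AE s in lborel. sin ((s + c) / 2) \<noteq> (0::real)"
proof -
  have "{s. sin ((s + c) / 2) = (0::real)} \<subseteq> range (\<lambda>i::int. 2 * of_int i * pi - c)"
  proof
    fix s assume "s \<in> {s. sin ((s + c) / 2) = (0::real)}"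
    then obtain i :: int where "(s + c) / 2 = of_int i * pi" using sin_zero_iff_int2 by auto
    then have "s = 2 * of_int i * pi - c" by (simp add: field_simps)
    then show "s \<in> range (\<lambda>i::int. 2 * of_int i * pi - c)" by blast
  qed
  then have "countable {s. sin ((s + c) / 2) = (0::real)}"
    by (rule countable_subset) simp
  then have "{s. sin ((s + c) / 2) = (0::real)} \<in> null_sets lborel"
    by (rule countable_imp_null_set_lborel)
  then show ?thesis
    by (rule AE_I') auto
qed

lemma lncos_integral:
  fixes A B phi :: real
  assumes "\<bar>A\<bar> < B"
  shows "integrable lborel (\<lambda>s. indicator {0<..<2*pi} s * ln \<bar>A - B * cos (s - phi)\<bar>)
    \<and> (LINT s|lborel. indicator {0<..<2*pi} s * ln \<bar>A - B * cos (s - phi)\<bar>) = 2 * pi * ln (B / 2)"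
proof -
  have B: "0 < B" using assms by linarith
  define al where "al = arccos (A / B)"
  have AB: "-1 < A / B" "A / B < 1" using assms B by (auto simp: field_simps abs_less_iff)
  have cal: "cos al = A / B" unfolding al_def using AB by (intro cos_arccos) auto
  define c1 where "c1 = al - phi"
  define c2 where "c2 = - phi - al"
  have factor: "A - B * cos (s - phi) = 2 * B * (sin ((s + c1) / 2) * sin ((s + c2) / 2))" for s
  proof -
    have "A - B * cos (s - phi) = B * (cos al - cos (s - phi))" using cal B by (simp add: field_simps)
    also have "\<dots> = B * (2 * sin ((al + (s - phi)) / 2) * sin (((s - phi) - al) / 2))"
      by (simp add: cos_diff_cos)
    also have "(al + (s - phi)) / 2 = (s + c1) / 2" by (simp add: c1_def)
    also have "((s - phi) - al) / 2 = (s + c2) / 2" by (simp add: c2_def)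
    finally show ?thesis by simp
  qed
  note I1 = lnsin_half[of c1] and I2 = lnsin_half[of c2]
  have ae: "AE s in lborel. indicator {0<..<2*pi} s * ln \<bar>A - B * cos (s - phi)\<bar> =
      indicator {0<..<2*pi} s * ln (2 * B) + (indicator {0<..<2*pi} s * ln \<bar>sin ((s + c1) / 2)\<bar>
       + indicator {0<..<2*pi} s * ln \<bar>sin ((s + c2) / 2)\<bar>)"
    using AE_sin_half_nz[of c1] AE_sin_half_nz[of c2]
  proof eventually_elim
    case (elim s)
    then show ?case using B by (simp add: factor abs_mult ln_mult algebra_simps)
  qed
  have int0: "integrable lborel (\<lambda>s. indicator {0<..<2*pi} s * ln (2 * B) + (indicator {0<..<2*pi} s * ln \<bar>sin ((s + c1) / 2)\<bar>
       + indicator {0<..<2*pi} s * ln \<bar>sin ((s + c2) / 2)\<bar>))"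
    using I1 I2 by (intro Bochner_Integration.integrable_add integrable_real_mult_indicator) (auto simp: mult.commute)
  have "integrable lborel (\<lambda>s. indicator {0<..<2*pi} s * ln \<bar>A - B * cos (s - phi)\<bar>)"
    using integrable_cong_AE[OF _ _ ae] int0 by simp
  moreover have "(LINT s|lborel. indicator {0<..<2*pi} s * ln \<bar>A - B * cos (s - phi)\<bar>)
     = (LINT s|lborel. indicator {0<..<2*pi} s * ln (2 * B) + (indicator {0<..<2*pi} s * ln \<bar>sin ((s + c1) / 2)\<bar>
       + indicator {0<..<2*pi} s * ln \<bar>sin ((s + c2) / 2)\<bar>))"
    using ae by (intro integral_cong_AE) auto
  moreover have "\<dots> = 2 * pi * ln (2 * B) + (- 2 * pi * ln 2 + - 2 * pi * ln 2)"
    using I1 I2 by (simp add: integrable_real_mult_indicator mult.commute)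
  moreover have "2 * pi * ln (2 * B) + (- 2 * pi * ln 2 + - 2 * pi * ln 2) = 2 * pi * ln (B / 2)"
    using B by (simp add: ln_mult ln_div algebra_simps)
  ultimately show ?thesis by simp
qed

lemma circ_nth [simp]: "circ s $ 1 = cos s" "circ s $ 2 = sin s"
  by (simp_all add: circ_def)

lemma inner2: "(x::real^2) \<bullet> y = x$1 * y$1 + x$2 * y$2"
  by (simp add: inner_vec_def sum_2)

lemma normsq2: "(norm (x::real^2))^2 = (x$1)^2 + (x$2)^2"
  unfolding power2_norm_eq_inner inner2 by (simp add: power2_eq_square)

lemma norm_circ [simp]: "norm (circ s) = 1"
proof -
  have "(norm (circ s))^2 = 1" by (simp add: normsq2)
  then show ?thesis using norm_ge_zero[of "circ s"] unfolding power2_eq_1_iff by linarith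
qed

lemma inner_circ: "circ s \<bullet> circ p = cos (s - p)"
  by (simp add: inner2 cos_diff)

lemma polar_rep: "\<exists>p. (v::real^2) = norm v *\<^sub>R circ p"
proof (cases "v = 0")
  case True then show ?thesis by simp
next
  case False
  then have n: "norm v > 0" by simp
  have e: "(v$1)^2 + (v$2)^2 = (norm v)^2" by (simp add: normsq2)
  have "(v$1 / norm v)^2 + (v$2 / norm v)^2 = ((v$1)^2 + (v$2)^2) / (norm v)^2"
    by (simp add: power_divide add_divide_distrib)
  also have "\<dots> = 1" using e n by simp
  finally have "(v$1 / norm v)^2 + (v$2 / norm v)^2 = 1" .
  then obtain t where t: "v$1 / norm v = cos t" "v$2 / norm v = sin t"
    using sincos_total_2pi by metis
  have "v = norm v *\<^sub>R circ t"
    unfolding vec_eq_iff forall_2 using t n by (simp add: field_simps)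
  then show ?thesis by blast
qed

lemma claimC:
  fixes z x :: "real^2"
  assumes R: "R > 0" and z: "norm z < R" and x: "norm x < R" and zx: "z \<noteq> x"
  shows "integrable lborel (\<lambda>s. indicator {0<..<2*pi} s * ln \<bar>(norm (R *\<^sub>R circ s - z))\<^sup>2 - (norm (x - R *\<^sub>R circ s))\<^sup>2\<bar>)
    \<and> (LINT s|lborel. indicator {0<..<2*pi} s * ln \<bar>(norm (R *\<^sub>R circ s - z))\<^sup>2 - (norm (x - R *\<^sub>R circ s))\<^sup>2\<bar>)
       = 2 * pi * ln (R * norm (z - x))"
proof -
  define rho where "rho = norm (z - x)"
  have rho: "rho > 0" using zx by (simp add: rho_def)
  obtain p where p: "z - x = rho *\<^sub>R circ p" using polar_rep[of "z - x"] unfolding rho_def by blast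
  define A where "A = (norm z)^2 - (norm x)^2"
  define B where "B = 2 * R * rho"
  have expr: "(norm (R *\<^sub>R circ s - z))\<^sup>2 - (norm (x - R *\<^sub>R circ s))\<^sup>2 = A - B * cos (s - p)" for s
  proof -
    have "(norm (R *\<^sub>R circ s - z))\<^sup>2 - (norm (x - R *\<^sub>R circ s))\<^sup>2
       = (norm z)^2 - (norm x)^2 - 2 * R * (circ s \<bullet> (z - x))"
      by (simp add: power2_norm_eq_inner inner_diff_left inner_diff_right algebra_simps inner_commute)
    also have "circ s \<bullet> (z - x) = rho * cos (s - p)" by (simp add: p inner_circ)
    finally show ?thesis by (simp add: A_def B_def)
  qed
  have "\<bar>A\<bar> < B"
  proof -
    have "A = (norm z - norm x) * (norm z + norm x)"
      by (simp add: A_def power2_eq_square algebra_simps)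
    then have "\<bar>A\<bar> = \<bar>norm z - norm x\<bar> * (norm z + norm x)"
      by (simp add: abs_mult)
    also have "\<dots> \<le> rho * (norm z + norm x)"
      unfolding rho_def by (intro mult_right_mono norm_triangle_ineq3) auto
    also have "\<dots> < rho * (2 * R)" using rho z x by (intro mult_strict_left_mono) auto
    finally show ?thesis by (simp add: B_def mult.commute mult.left_commute)
  qed
  note L = lncos_integral[OF this, of p]
  have "ln (B / 2) = ln (R * norm (z - x))" by (simp add: B_def rho_def)
  then show ?thesis using L by (simp add: expr)
qed

definition pg :: "real^2 \<Rightarrow> real^2" where "pg v = (v$1) *\<^sub>R circ (v$2)"
definition dcirc :: "real \<Rightarrow> real^2" where "dcirc s = vector [- sin s, cos s]"
definition pg' :: "real^2 \<Rightarrow> real^2 \<Rightarrow> real^2" where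
  "pg' v h = (h$1) *\<^sub>R circ (v$2) + (v$1 * h$2) *\<^sub>R dcirc (v$2)"

lemma dcirc_nth [simp]: "dcirc s $ 1 = - sin s" "dcirc s $ 2 = cos s"
  by (simp_all add: dcirc_def)

lemma axis_nth2 [simp]: "axis (1::2) (1::real) $ 1 = 1" "axis (1::2) (1::real) $ 2 = 0"
   "axis (2::2) (1::real) $ 1 = 0" "axis (2::2) (1::real) $ 2 = 1"
  by (simp_all add: axis_def)

lemma pg_deriv: "(pg has_derivative pg' v) (at v within S)"
proof -
  have bl1: "bounded_linear (\<lambda>x::real^2. x $ 1)" and bl2: "bounded_linear (\<lambda>x::real^2. x $ 2)"
    by (simp_all add: bounded_linear_vec_nth)
  have d1: "((\<lambda>x::real^2. x $ 1) has_derivative (\<lambda>x. x $ 1)) (at v within S)"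
    using bl1 by (rule bounded_linear.has_derivative[OF _ has_derivative_ident])
  have d2: "((\<lambda>x::real^2. x $ 2) has_derivative (\<lambda>x. x $ 2)) (at v within S)"
    using bl2 by (rule bounded_linear.has_derivative[OF _ has_derivative_ident])
  show ?thesis
  proof (rule has_derivative_componentwise_within[THEN iffD2], rule ballI)
    fix i :: "real^2" assume "i \<in> Basis"
    then obtain k where k: "i = axis k 1" by (auto simp: Basis_vec_def)
    have "k = 1 \<or> k = 2" using exhaust_2 by blast
    then show "((\<lambda>x. pg x \<bullet> i) has_derivative (\<lambda>x. pg' v x \<bullet> i)) (at v within S)"
    proof
      assume "k = 1"
      then show ?thesis unfolding k
        by (auto simp: pg_def pg'_def inner_axis algebra_simps intro!: derivative_eq_intros d1 d2)
    next
      assume "k = 2"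
      then show ?thesis unfolding k
        by (auto simp: pg_def pg'_def inner_axis algebra_simps intro!: derivative_eq_intros d1 d2)
    qed
  qed
qed

lemma pg_det: "det (matrix (pg' v)) = v$1"
proof -
  have "det (matrix (pg' v)) = v $ 1 * (cos (v $ 2) * cos (v $ 2)) + v $ 1 * (sin (v $ 2) * sin (v $ 2))"
    by (simp add: det_2 matrix_def pg'_def power2_eq_square algebra_simps)
  also have "\<dots> = v$1 * (cos (v $ 2) * cos (v $ 2) + sin (v $ 2) * sin (v $ 2))" by (rule distrib_left[symmetric])
  also have "\<dots> = v$1" by (simp only: sin_cos_squared_add3 mult_1_right)
  finally show ?thesis .
qed

definition PS :: "(real^2) set" where "PS = {v. 0 < v$1 \<and> 0 < v$2 \<and> v$2 < 2*pi}"
definition PU :: "(real^2) set" where "PU = - {y. y$2 = 0 \<and> 0 \<le> y$1}"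

lemma PS_open: "open PS"
proof -
  have "PS = {v. 0 < v$1} \<inter> {v. 0 < v$2} \<inter> {v. v$2 < 2*pi}" by (auto simp: PS_def)
  moreover have "open {v::real^2. 0 < v$1}" "open {v::real^2. 0 < v$2}" "open {v::real^2. v$2 < 2*pi}"
    by (auto intro!: open_Collect_less continuous_intros)
  ultimately show ?thesis by (metis open_Int)
qed

lemma PS_sets [measurable]: "PS \<in> sets lborel" "PS \<in> sets lebesgue"
  using PS_open by auto

lemma PU_closed: "closed (- PU)"
proof -
  have "- PU = {y. y$2 = 0} \<inter> {y::real^2. 0 \<le> y$1}" by (auto simp: PU_def)
  moreover have "closed {y::real^2. y$2 = 0}" "closed {y::real^2. 0 \<le> y$1}"
    by (auto intro!: closed_Collect_eq closed_Collect_le continuous_intros)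
  ultimately show ?thesis by auto
qed

lemma PU_sets [measurable]: "PU \<in> sets lborel"
proof -
  have "open PU" using PU_closed by (simp add: closed_def)
  then show ?thesis by auto
qed

lemma PU_null: "- PU \<in> null_sets lborel" "- PU \<in> null_sets lebesgue"
proof -
  have "negligible {y::real^2. y$2 = 0}" by (rule negligible_standard_hyperplane_cart)
  then have "negligible (- PU)" by (rule negligible_subset) (auto simp: PU_def)
  then show l: "- PU \<in> null_sets lebesgue" by (simp add: negligible_iff_null_sets)
  have "- PU \<in> sets lborel" using PU_closed by auto
  then show "- PU \<in> null_sets lborel" using l by (simp add: null_sets_completion_iff)
qed

lemma circ_eq_iff: "circ a = circ b \<longleftrightarrow> cos a = cos b \<and> sin a = sin b"
  by (auto simp: vec_eq_iff forall_2)

lemma pg_inj: "inj_on pg PS"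
proof (rule inj_onI)
  fix u v assume u: "u \<in> PS" and v: "v \<in> PS" and e: "pg u = pg v"
  have "norm (pg u) = u$1" "norm (pg v) = v$1" using u v by (auto simp: pg_def PS_def)
  then have e1: "u$1 = v$1" using e by simp
  then have "circ (u$2) = circ (v$2)" using e u by (auto simp: pg_def PS_def)
  then have "sin (u$2) = sin (v$2) \<and> cos (u$2) = cos (v$2)" by (simp add: circ_eq_iff)
  then obtain n :: int where n: "u$2 = v$2 + 2 * pi * n" using sin_cos_eq_iff by blast
  have a: "0 < v$2" "v$2 < 2*pi" "0 < u$2" "u$2 < 2*pi" using u v by (auto simp: PS_def)
  have "- 2 * pi < 2 * pi * n" "2 * pi * n < 2 * pi" using a n by linarith+
  then have "pi * (-1) < pi * real_of_int n" "pi * real_of_int n < pi * 1" by simp_all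
  then have "-1 < real_of_int n" "real_of_int n < 1" by (simp_all only: mult_less_cancel_left_pos[OF pi_gt_zero])
  then have "n = 0" by linarith
  then have "u$2 = v$2" using n by simp
  then show "u = v" using e1 by (simp add: vec_eq_iff forall_2)
qed

lemma pg_image: "pg ` PS = PU"
proof
  show "pg ` PS \<subseteq> PU"
  proof
    fix y assume "y \<in> pg ` PS"
    then obtain v where v: "v \<in> PS" "y = pg v" by auto
    show "y \<in> PU"
    proof (rule ccontr)
      assume "y \<notin> PU"
      then have y: "y$2 = 0" "0 \<le> y$1" by (auto simp: PU_def)
      have r: "0 < v$1" using v by (auto simp: PS_def)
      then have "sin (v$2) = 0" using y v by (simp add: pg_def)
      then obtain i :: int where i: "v$2 = of_int i * pi" using sin_zero_iff_int2 by blast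
      have "0 < of_int i * pi" "of_int i * pi < 2 * pi" using v i by (auto simp: PS_def)
      then have "0 < real_of_int i" "real_of_int i < 2" by (simp_all add: zero_less_mult_iff mult_less_cancel_right_pos)
      then have "i = 1" by linarith
      then have "cos (v$2) = -1" using i by simp
      then have "y$1 = - v$1" using v by (simp add: pg_def)
      then show False using y r by simp
    qed
  qed
next
  show "PU \<subseteq> pg ` PS"
  proof
    fix y :: "real^2" assume y: "y \<in> PU"
    have "y \<noteq> 0" using y by (auto simp: PU_def)
    then have n: "norm y > 0" by simp
    have e: "(y$1)^2 + (y$2)^2 = (norm y)^2" by (simp add: normsq2)
    have "(y$1 / norm y)^2 + (y$2 / norm y)^2 = ((y$1)^2 + (y$2)^2) / (norm y)^2"
      by (simp add: power_divide add_divide_distrib)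
    also have "\<dots> = 1" using e n by simp
    finally have "(y$1 / norm y)^2 + (y$2 / norm y)^2 = 1" .
    then obtain t where t: "0 \<le> t" "t < 2*pi" "y$1 / norm y = cos t" "y$2 / norm y = sin t"
      using sincos_total_2pi by metis
    have y1: "y$1 = norm y * cos t" "y$2 = norm y * sin t" using t n by (simp_all add: field_simps)
    have "t \<noteq> 0"
    proof
      assume "t = 0"
      then have "y$2 = 0" "0 \<le> y$1" using y1 n by simp_all
      then show False using y by (simp add: PU_def)
    qed
    define v :: "real^2" where "v = vector [norm y, t]"
    have "v \<in> PS" using t n \<open>t \<noteq> 0\<close> by (simp add: v_def PS_def)
    moreover have "pg v = y" using y1 by (simp add: v_def pg_def vec_eq_iff forall_2)
    ultimately show "y \<in> pg ` PS" by blast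
  qed
qed

lemma cov_vec:
  fixes G :: "real^2 \<Rightarrow> real^1"
  shows "set_integrable lebesgue PS (\<lambda>v. \<bar>v$1\<bar> *\<^sub>R G (pg v)) \<and> (LINT v:PS|lebesgue. \<bar>v$1\<bar> *\<^sub>R G (pg v)) = b
     \<longleftrightarrow> set_integrable lebesgue PU G \<and> (LINT y:PU|lebesgue. G y) = b"
proof -
  have H: "(\<lambda>v. \<bar>det (matrix (pg' v))\<bar> *\<^sub>R G (pg v)) absolutely_integrable_on PS \<and>
       integral PS (\<lambda>v. \<bar>det (matrix (pg' v))\<bar> *\<^sub>R G (pg v)) = b
     \<longleftrightarrow> G absolutely_integrable_on (pg ` PS) \<and> integral (pg ` PS) G = b"
    by (rule has_absolute_integral_change_of_variables[OF PS_sets(2) pg_deriv pg_inj])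
  show ?thesis
  proof
    assume a: "set_integrable lebesgue PS (\<lambda>v. \<bar>v$1\<bar> *\<^sub>R G (pg v)) \<and> (LINT v:PS|lebesgue. \<bar>v$1\<bar> *\<^sub>R G (pg v)) = b"
    then have "(\<lambda>v. \<bar>det (matrix (pg' v))\<bar> *\<^sub>R G (pg v)) absolutely_integrable_on PS \<and>
       integral PS (\<lambda>v. \<bar>det (matrix (pg' v))\<bar> *\<^sub>R G (pg v)) = b"
      using set_lebesgue_integral_eq_integral(2)[of PS "\<lambda>v. \<bar>v$1\<bar> *\<^sub>R G (pg v)"] by (simp add: pg_det)
    then have "G absolutely_integrable_on PU \<and> integral PU G = b" using H pg_image by simp
    then show "set_integrable lebesgue PU G \<and> (LINT y:PU|lebesgue. G y) = b"
      using set_lebesgue_integral_eq_integral(2)[of PU G] by simp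
  next
    assume a: "set_integrable lebesgue PU G \<and> (LINT y:PU|lebesgue. G y) = b"
    then have "G absolutely_integrable_on (pg ` PS) \<and> integral (pg ` PS) G = b"
      using set_lebesgue_integral_eq_integral(2)[of PU G] pg_image by simp
    then have "(\<lambda>v. \<bar>v$1\<bar> *\<^sub>R G (pg v)) absolutely_integrable_on PS \<and>
       integral PS (\<lambda>v. \<bar>v$1\<bar> *\<^sub>R G (pg v)) = b" using H by (simp add: pg_det)
    then show "set_integrable lebesgue PS (\<lambda>v. \<bar>v$1\<bar> *\<^sub>R G (pg v)) \<and> (LINT v:PS|lebesgue. \<bar>v$1\<bar> *\<^sub>R G (pg v)) = b"
      using set_lebesgue_integral_eq_integral(2)[of PS "\<lambda>v. \<bar>v$1\<bar> *\<^sub>R G (pg v)"] by simp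
  qed
qed

lemma set_integrable_vec_iff:
  "set_integrable M A (\<lambda>x. vec (f x) :: real^1) \<longleftrightarrow> set_integrable M A (f :: _ \<Rightarrow> real)"
proof
  assume "set_integrable M A (\<lambda>x. vec (f x) :: real^1)"
  then have "integrable M (\<lambda>x. (indicator A x *\<^sub>R (vec (f x) :: real^1)) $ 1)"
    unfolding set_integrable_def by (rule integrable_bounded_linear[OF bounded_linear_vec_nth])
  then show "set_integrable M A f" unfolding set_integrable_def by simp
next
  assume "set_integrable M A f"
  then have "integrable M (\<lambda>x. (indicator A x *\<^sub>R f x) *\<^sub>R (vec 1 :: real^1))"
    unfolding set_integrable_def by (rule integrable_bounded_linear[OF bounded_linear_scaleR_left])
  moreover have "(\<lambda>x. (indicator A x *\<^sub>R f x) *\<^sub>R (vec 1 :: real^1)) = (\<lambda>x. indicator A x *\<^sub>R vec (f x))"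
    by (auto simp: vec_eq_iff)
  ultimately show "set_integrable M A (\<lambda>x. vec (f x) :: real^1)" unfolding set_integrable_def by simp
qed

lemma set_integral_vec:
  "set_integrable M A (f :: _ \<Rightarrow> real) \<Longrightarrow> (LINT x:A|M. (vec (f x) :: real^1)) = vec (LINT x:A|M. f x)"
proof -
  assume a: "set_integrable M A f"
  have "(\<lambda>x. indicator A x *\<^sub>R (vec (f x) :: real^1)) = (\<lambda>x. (indicator A x *\<^sub>R f x) *\<^sub>R (vec 1 :: real^1))"
    by (auto simp: vec_eq_iff)
  then have "(LINT x:A|M. (vec (f x) :: real^1)) = (LINT x|M. (indicator A x *\<^sub>R f x) *\<^sub>R (vec 1 :: real^1))"
    unfolding set_lebesgue_integral_def by simp
  also have "\<dots> = (LINT x|M. indicator A x *\<^sub>R f x) *\<^sub>R (vec 1 :: real^1)"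
    using a unfolding set_integrable_def by simp
  finally show ?thesis unfolding set_lebesgue_integral_def by (simp add: vec_eq_iff)
qed

lemma polar_leb:
  fixes F :: "real^2 \<Rightarrow> real"
  shows "set_integrable lebesgue PS (\<lambda>v. \<bar>v$1\<bar> * F (pg v)) \<longleftrightarrow> set_integrable lebesgue PU F"
    and "set_integrable lebesgue PU F \<Longrightarrow>
       (LINT v:PS|lebesgue. \<bar>v$1\<bar> * F (pg v)) = (LINT y:PU|lebesgue. F y)"
proof -
  have e: "(\<lambda>v. \<bar>v$1\<bar> *\<^sub>R vec (F (pg v))) = (\<lambda>v. (vec (\<bar>v$1\<bar> * F (pg v)) :: real^1))"
    by (auto simp: vec_eq_iff)
  note C = cov_vec[of "\<lambda>y. vec (F y)", unfolded e]
  show iff: "set_integrable lebesgue PS (\<lambda>v. \<bar>v$1\<bar> * F (pg v)) \<longleftrightarrow> set_integrable lebesgue PU F"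
    using C[of "LINT y:PU|lebesgue. vec (F y)"] C[of "LINT v:PS|lebesgue. vec (\<bar>v$1\<bar> * F (pg v))"]
    by (auto simp: set_integrable_vec_iff)
  assume a: "set_integrable lebesgue PU F"
  then have b: "set_integrable lebesgue PS (\<lambda>v. \<bar>v$1\<bar> * F (pg v))" using iff by simp
  have "(LINT v:PS|lebesgue. (vec (\<bar>v$1\<bar> * F (pg v)) :: real^1)) = (LINT y:PU|lebesgue. vec (F y))"
    using C[of "LINT y:PU|lebesgue. vec (F y)"] a by (simp add: set_integrable_vec_iff)
  then have "vec (LINT v:PS|lebesgue. \<bar>v$1\<bar> * F (pg v)) = (vec (LINT y:PU|lebesgue. F y) :: real^1)"
    using a b by (simp add: set_integral_vec)
  then show "(LINT v:PS|lebesgue. \<bar>v$1\<bar> * F (pg v)) = (LINT y:PU|lebesgue. F y)"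
    by (simp add: vec_eq_iff)
qed

definition Qm :: "real \<times> real \<Rightarrow> real^2" where "Qm p = (\<chi> i. if i = 1 then fst p else snd p)"

lemma two_ne_one: "(2::2) \<noteq> 1" by simp

lemma Qm_nth [simp]: "Qm p $ 1 = fst p" "Qm p $ 2 = snd p"
  by (simp_all add: Qm_def)

lemma Basis_2: "(Basis :: (real^2) set) = {axis 1 1, axis 2 1}"
  by (auto simp: Basis_vec_def UNIV_2)

lemma axis12_ne: "axis (1::2) (1::real) \<noteq> axis 2 1"
  by (simp add: axis_eq_axis)

lemma Qm_cont: "continuous_on UNIV Qm"
  unfolding Qm_def
proof (intro continuous_intros)
  fix i :: 2 show "continuous_on UNIV (\<lambda>x::real\<times>real. if i = 1 then fst x else snd x)"
    by (cases "i = 1") (auto intro!: continuous_intros)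
qed

lemma Qm_meas [measurable]: "Qm \<in> borel_measurable (lborel \<Otimes>\<^sub>M lborel)"
proof -
  have "Qm \<in> borel_measurable borel" using Qm_cont by (rule borel_measurable_continuous_onI)
  then show ?thesis by (simp add: lborel_prod measurable_lborel1)
qed

lemma Qm_distr: "distr (lborel \<Otimes>\<^sub>M lborel) borel Qm = (lborel :: (real^2) measure)"
proof (rule lborel_eqI[symmetric])
  fix l u :: "real^2"
  assume le: "\<And>b. b \<in> Basis \<Longrightarrow> l \<bullet> b \<le> u \<bullet> b"
  have lu: "l$1 \<le> u$1" "l$2 \<le> u$2" using le[of "axis 1 1"] le[of "axis 2 1"] by (auto simp: Basis_2 inner_axis)
  have "Qm -` box l u \<inter> space (lborel \<Otimes>\<^sub>M lborel) = {l$1<..<u$1} \<times> {l$2<..<u$2}"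
    by (auto simp: mem_box Basis_2 inner_axis space_pair_measure)
  then have "emeasure (distr (lborel \<Otimes>\<^sub>M lborel) borel Qm) (box l u)
      = emeasure (lborel \<Otimes>\<^sub>M lborel) ({l$1<..<u$1} \<times> {l$2<..<u$2})"
    by (simp add: emeasure_distr)
  also have "\<dots> = emeasure lborel {l$1<..<u$1} * emeasure lborel {l$2<..<u$2}"
    by (rule sigma_finite_measure.emeasure_pair_measure_Times[OF lborel.sigma_finite_measure_axioms]) auto
  also have "\<dots> = ennreal (u$1 - l$1) * ennreal (u$2 - l$2)"
    using lu by simp
  also have "\<dots> = (\<Prod>b\<in>Basis. (u - l) \<bullet> b)"
  proof -
    have "l$1 \<le> u$1" "l$2 \<le> u$2" using le[of "axis 1 1"] le[of "axis 2 1"] by (auto simp: Basis_2 inner_axis)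
    then show ?thesis using axis12_ne by (simp add: Basis_2 inner_axis ennreal_mult)
  qed
  finally show "emeasure (distr (lborel \<Otimes>\<^sub>M lborel) borel Qm) (box l u) = (\<Prod>b\<in>Basis. (u - l) \<bullet> b)" .
qed simp

lemma circ_cont: "continuous_on UNIV circ"
proof -
  have "circ = (\<lambda>s. \<chi> i. if i = 1 then cos s else sin s)"
    by (auto simp: fun_eq_iff vec_eq_iff forall_2)
  moreover have "continuous_on UNIV (\<lambda>s::real. \<chi> i::2. if i = 1 then cos s else sin s)"
  proof (intro continuous_intros)
    fix i :: 2 show "continuous_on UNIV (\<lambda>s::real. if i = 1 then cos s else sin s)"
      by (cases "i = 1") (auto intro!: continuous_intros)
  qed
  ultimately show ?thesis by metis
qed

lemma circ_meas [measurable]: "circ \<in> borel_measurable borel"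
  using circ_cont by (rule borel_measurable_continuous_onI)

lemma pg_meas [measurable]: "pg \<in> borel_measurable borel"
  unfolding pg_def[abs_def] by measurable

definition Pf :: "(real^2 \<Rightarrow> real) \<Rightarrow> real \<times> real \<Rightarrow> real" where
  "Pf F p = indicator ({0<..} \<times> {0<..<2*pi}) p * (fst p * F (fst p *\<^sub>R circ (snd p)))"

lemma Pf_Qm: "indicator PS (Qm p) * (\<bar>Qm p $ 1\<bar> * F (pg (Qm p))) = Pf F p"
  by (cases p) (auto simp: Pf_def PS_def pg_def indicator_def)

lemma polar_pair:
  fixes F :: "real^2 \<Rightarrow> real"
  assumes F [measurable]: "F \<in> borel_measurable borel"
  shows "integrable lborel F \<longleftrightarrow> integrable (lborel \<Otimes>\<^sub>M lborel) (Pf F)"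
    and "integrable lborel F \<Longrightarrow> (LINT y|lborel. F y) = (LINT p|(lborel \<Otimes>\<^sub>M lborel). Pf F p)"
proof -
  have Fl [measurable]: "F \<in> borel_measurable lborel" using F by (simp add: measurable_lborel1)
  have FL: "F \<in> borel_measurable lebesgue" using Fl by (rule measurable_completion)
  define h where "h v = \<bar>v$1\<bar> * F (pg v)" for v :: "real^2"
  have hb [measurable]: "h \<in> borel_measurable borel" unfolding h_def[abs_def] by measurable
  have hib [measurable]: "(\<lambda>v. indicator PS v *\<^sub>R h v) \<in> borel_measurable lborel"
    using hb by (simp add: measurable_lborel1)
  have ae: "AE x in lebesgue. indicator PU x *\<^sub>R F x = F x"
    using AE_not_in[OF PU_null(2)] by eventually_elim auto
  have ind_meas: "(\<lambda>x. indicator PU x *\<^sub>R F x) \<in> borel_measurable lebesgue"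
    by (rule measurable_completion) measurable
  have s1: "set_integrable lebesgue PU F \<longleftrightarrow> integrable lborel F"
    unfolding set_integrable_def
    using integrable_cong_AE[OF ind_meas FL ae] integrable_completion[OF Fl] by simp
  have s1e: "(LINT y:PU|lebesgue. F y) = (LINT y|lborel. F y)"
    unfolding set_lebesgue_integral_def
    using integral_cong_AE[OF ind_meas FL ae] integral_completion[OF Fl] by simp
  have s2: "set_integrable lebesgue PS h \<longleftrightarrow> set_integrable lborel PS h"
    unfolding set_integrable_def using integrable_completion[OF hib] .
  have s2e: "(LINT v:PS|lebesgue. h v) = (LINT v:PS|lborel. h v)"
    unfolding set_lebesgue_integral_def using integral_completion[OF hib] .
  have hib2 [measurable]: "(\<lambda>v. indicator PS v *\<^sub>R h v) \<in> borel_measurable borel"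
    using hb by measurable
  have s3: "set_integrable lborel PS h \<longleftrightarrow> integrable (lborel \<Otimes>\<^sub>M lborel) (Pf F)"
  proof -
    have "set_integrable lborel PS h \<longleftrightarrow> integrable (distr (lborel \<Otimes>\<^sub>M lborel) borel Qm) (\<lambda>v. indicator PS v *\<^sub>R h v)"
      unfolding set_integrable_def Qm_distr ..
    also have "\<dots> \<longleftrightarrow> integrable (lborel \<Otimes>\<^sub>M lborel) (\<lambda>p. indicator PS (Qm p) *\<^sub>R h (Qm p))"
      by (rule integrable_distr_eq[OF Qm_meas hib2])
    also have "(\<lambda>p. indicator PS (Qm p) *\<^sub>R h (Qm p)) = Pf F"
      using Pf_Qm by (auto simp: h_def fun_eq_iff)
    finally show ?thesis .
  qed
  have s3e: "(LINT v:PS|lborel. h v) = (LINT p|(lborel \<Otimes>\<^sub>M lborel). Pf F p)"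
  proof -
    have "(LINT v:PS|lborel. h v) = integral\<^sup>L (distr (lborel \<Otimes>\<^sub>M lborel) borel Qm) (\<lambda>v. indicator PS v *\<^sub>R h v)"
      unfolding set_lebesgue_integral_def Qm_distr ..
    also have "\<dots> = (LINT p|(lborel \<Otimes>\<^sub>M lborel). indicator PS (Qm p) *\<^sub>R h (Qm p))"
      by (rule integral_distr[OF Qm_meas hib2])
    also have "(\<lambda>p. indicator PS (Qm p) *\<^sub>R h (Qm p)) = Pf F"
      using Pf_Qm by (auto simp: h_def fun_eq_iff)
    finally show ?thesis .
  qed
  show iff: "integrable lborel F \<longleftrightarrow> integrable (lborel \<Otimes>\<^sub>M lborel) (Pf F)"
    using polar_leb(1)[of F] s1 s2 s3 by (simp add: h_def[abs_def])
  assume a: "integrable lborel F"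
  then have "set_integrable lebesgue PU F" using s1 by simp
  then have "(LINT v:PS|lebesgue. h v) = (LINT y:PU|lebesgue. F y)"
    using polar_leb(2)[of F] by (simp add: h_def[abs_def])
  then show "(LINT y|lborel. F y) = (LINT p|(lborel \<Otimes>\<^sub>M lborel). Pf F p)"
    using s1e s2e s3e by simp
qed

lemma lborel_reflect: "distr lborel borel (\<lambda>x. c - x) = (lborel :: 'a::euclidean_space measure)"
proof -
  have "lborel = density (distr lborel borel (\<lambda>x. c + (-1::real) *\<^sub>R x)) (\<lambda>_. \<bar>-1::real\<bar>^DIM('a))"
    by (rule lborel_affine) simp
  then show ?thesis by (simp add: density_1)
qed

lemma reflect_integrable:
  fixes F :: "'a::euclidean_space \<Rightarrow> real"
  assumes [measurable]: "F \<in> borel_measurable borel"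
  shows "integrable lborel (\<lambda>x. F (c - x)) \<longleftrightarrow> integrable lborel F"
    and "(LINT x|lborel. F (c - x)) = (LINT x|lborel. F x)"
proof -
  have m: "(\<lambda>x::'a. c - x) \<in> measurable lborel borel" by simp
  show "integrable lborel (\<lambda>x. F (c - x)) \<longleftrightarrow> integrable lborel F"
    using integrable_distr_eq[OF m, of F] by (simp add: lborel_reflect)
  show "(LINT x|lborel. F (c - x)) = (LINT x|lborel. F x)"
    using integral_distr[OF m, of F] by (simp add: lborel_reflect)
qed

definition Pc :: "real^2 \<Rightarrow> (real^2 \<Rightarrow> real) \<Rightarrow> real \<times> real \<Rightarrow> real" where
  "Pc c F p = indicator ({0<..} \<times> {0<..<2*pi}) p * (fst p * F (c - fst p *\<^sub>R circ (snd p)))"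

lemma polar_center:
  fixes F :: "real^2 \<Rightarrow> real"
  assumes F [measurable]: "F \<in> borel_measurable borel"
  shows "integrable lborel F \<longleftrightarrow> integrable (lborel \<Otimes>\<^sub>M lborel) (Pc c F)"
    and "integrable lborel F \<Longrightarrow> (LINT y|lborel. F y) = (LINT p|(lborel \<Otimes>\<^sub>M lborel). Pc c F p)"
proof -
  have F' [measurable]: "(\<lambda>y. F (c - y)) \<in> borel_measurable borel" by measurable
  have e: "Pf (\<lambda>y. F (c - y)) = Pc c F" by (simp add: Pf_def Pc_def fun_eq_iff)
  show "integrable lborel F \<longleftrightarrow> integrable (lborel \<Otimes>\<^sub>M lborel) (Pc c F)"
    using polar_pair(1)[OF F'] reflect_integrable(1)[OF F] e by simp
  assume "integrable lborel F"
  then show "(LINT y|lborel. F y) = (LINT p|(lborel \<Otimes>\<^sub>M lborel). Pc c F p)"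
    using polar_pair(2)[OF F'] reflect_integrable[OF F] e by simp
qed

lemma prod_int:
  fixes a b :: "real \<Rightarrow> real"
  assumes a: "integrable lborel a" and b: "integrable lborel b"
  shows "integrable (lborel \<Otimes>\<^sub>M lborel) (\<lambda>p. a (fst p) * b (snd p))"
    and "(LINT p|(lborel \<Otimes>\<^sub>M lborel). a (fst p) * b (snd p)) = (LINT x|lborel. a x) * (LINT y|lborel. b y)"
proof -
  have [measurable]: "a \<in> borel_measurable lborel" "b \<in> borel_measurable lborel"
    using a b by auto
  show i: "integrable (lborel \<Otimes>\<^sub>M lborel) (\<lambda>p. a (fst p) * b (snd p))"
  proof (rule lborel_pair.Fubini_integrable)
    show "(\<lambda>p. a (fst p) * b (snd p)) \<in> borel_measurable (lborel \<Otimes>\<^sub>M lborel)" by measurable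
    have "integrable lborel (\<lambda>x. \<bar>a x\<bar> * (LINT y|lborel. \<bar>b y\<bar>))"
      using a by (intro integrable_mult_left) auto
    then show "integrable lborel (\<lambda>x. LINT y|lborel. norm (a (fst (x, y)) * b (snd (x, y))))"
      by (simp add: abs_mult)
    show "AE x in lborel. integrable lborel (\<lambda>y. a (fst (x, y)) * b (snd (x, y)))"
      using b by auto
  qed
  have "(LINT p|(lborel \<Otimes>\<^sub>M lborel). a (fst p) * b (snd p)) = (LINT x|lborel. LINT y|lborel. a x * b y)"
    using lborel_pair.integral_fst'[OF i] by simp
  also have "\<dots> = (LINT x|lborel. a x * (LINT y|lborel. b y))" by simp
  also have "\<dots> = (LINT x|lborel. a x) * (LINT y|lborel. b y)" by simp
  finally show "(LINT p|(lborel \<Otimes>\<^sub>M lborel). a (fst p) * b (snd p)) = (LINT x|lborel. a x) * (LINT y|lborel. b y)" .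
qed

lemma lnabs_int:
  assumes a: "0 < a"
  shows "integrable lborel (\<lambda>u. indicator {-a<..<a} u * \<bar>ln \<bar>u::real\<bar>\<bar>)"
proof -
  have i1: "integrable lborel (\<lambda>u. \<bar>indicator {0<..<a} u * ln (u::real)\<bar>)"
    using ln_int_0a[OF a] by (rule integrable_abs)
  have i1': "integrable lborel (\<lambda>u. indicator {0<..<a} u * \<bar>ln \<bar>u::real\<bar>\<bar>)"
    by (rule int_eq[OF i1]) (auto simp: indicator_def)
  have i2: "integrable lborel (\<lambda>u. indicator {0<..<a} (0 + (-1) * u) * \<bar>ln \<bar>0 + (-1) * u::real\<bar>\<bar>)"
    using lborel_integrable_real_affine[OF i1', of "-1" 0] by simp
  have i2': "integrable lborel (\<lambda>u. indicator {-a<..<0} u * \<bar>ln \<bar>u::real\<bar>\<bar>)"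
    by (rule int_eq[OF i2]) (auto simp: indicator_def)
  have "integrable lborel (\<lambda>u. indicator {0<..<a} u * \<bar>ln \<bar>u::real\<bar>\<bar> + indicator {-a<..<0} u * \<bar>ln \<bar>u::real\<bar>\<bar>)"
    using i1' i2' by simp
  then show ?thesis
    by (rule int_eq) (auto simp: indicator_def)
qed

definition Lc :: "real \<Rightarrow> real" where
  "Lc a = (LINT u|lborel. indicator {-a<..<a} u * \<bar>ln \<bar>u::real\<bar>\<bar>)"

definition Kb :: "real \<Rightarrow> real" where
  "Kb a = a * (2 * Lc a + a * \<bar>ln (2 * a)\<bar>)"

lemma ln_sum_bound:
  fixes r d a :: real
  assumes r: "0 < r" "r < a" and d: "0 \<le> d" "d \<le> a"
  shows "\<bar>ln \<bar>r^2 - d^2\<bar>\<bar> \<le> \<bar>ln \<bar>r - d\<bar>\<bar> + \<bar>ln \<bar>r\<bar>\<bar> + \<bar>ln (2 * a)\<bar>"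
proof (cases "r = d")
  case True then show ?thesis by simp
next
  case False
  have rd: "0 < r + d" using r d by simp
  have "r^2 - d^2 = (r - d) * (r + d)" by (simp add: power2_eq_square algebra_simps)
  then have "\<bar>r^2 - d^2\<bar> = \<bar>r - d\<bar> * (r + d)"
    using rd by (simp add: abs_mult)
  then have "ln \<bar>r^2 - d^2\<bar> = ln \<bar>r - d\<bar> + ln (r + d)"
    using rd False by (simp add: ln_mult)
  moreover have "\<bar>ln (r + d)\<bar> \<le> \<bar>ln \<bar>r\<bar>\<bar> + \<bar>ln (2 * a)\<bar>"
  proof (cases "1 \<le> r + d")
    case True
    then have "0 \<le> ln (r + d)" by simp
    moreover have "ln (r + d) \<le> ln (2 * a)" using r d rd by (subst ln_le_cancel_iff) auto
    ultimately show ?thesis by simp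
  next
    case False
    then have "ln (r + d) < 0" using rd by simp
    moreover have "ln r \<le> ln (r + d)" using r d by (subst ln_le_cancel_iff) auto
    ultimately show ?thesis using r by simp
  qed
  ultimately show ?thesis using abs_triangle_ineq[of "ln \<bar>r - d\<bar>" "ln (r + d)"] by linarith
qed

lemma LOGT:
  fixes a d :: real
  assumes a: "0 < a" and d: "0 \<le> d" "d \<le> a"
  shows "integrable lborel (\<lambda>r. indicator {0<..<a} r * (r * \<bar>ln \<bar>r^2 - d^2\<bar>\<bar>))"
    and "(LINT r|lborel. indicator {0<..<a} r * (r * \<bar>ln \<bar>r^2 - d^2\<bar>\<bar>)) \<le> Kb a"
proof -
  note LI = lnabs_int[OF a]
  have sh: "integrable lborel (\<lambda>r. indicator {-a<..<a} (-d + 1 * r) * \<bar>ln \<bar>-d + 1 * r\<bar>\<bar>)"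
    using lborel_integrable_real_affine[OF LI, of 1 "-d"] by simp
  have shI: "(LINT r|lborel. indicator {-a<..<a} (-d + 1 * r) * \<bar>ln \<bar>-d + 1 * r\<bar>\<bar>) = Lc a"
    using lborel_integral_real_affine[of 1 "\<lambda>u. indicator {-a<..<a} u * \<bar>ln \<bar>u::real\<bar>\<bar>" "-d"]
    by (simp add: Lc_def)
  define M where "M r = a * (indicator {-a<..<a} (-d + 1 * r) * \<bar>ln \<bar>-d + 1 * r\<bar>\<bar>
      + indicator {-a<..<a} r * \<bar>ln \<bar>r\<bar>\<bar> + indicator {0<..<a} r * \<bar>ln (2 * a)\<bar>)" for r
  have Ii: "integrable lborel (indicat_real {0<..<a})"
    using a by (intro integrable_real_indicator) auto
  have Mi: "integrable lborel M"
    unfolding M_def using sh LI Ii by (intro integrable_mult_right Bochner_Integration.integrable_add) auto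
  have MI: "(LINT r|lborel. M r) = Kb a"
  proof -
    have "(LINT r|lborel. M r) = a * ((LINT r|lborel. indicator {-a<..<a} (-d + 1 * r) * \<bar>ln \<bar>-d + 1 * r\<bar>\<bar>)
      + (LINT r|lborel. indicator {-a<..<a} r * \<bar>ln \<bar>r\<bar>\<bar>) + (LINT r|lborel. indicator {0<..<a} r * \<bar>ln (2 * a)\<bar>))"
      unfolding M_def using sh LI Ii by simp
    also have "\<dots> = Kb a" using shI a by (simp add: Lc_def Kb_def)
    finally show ?thesis .
  qed
  have bound: "norm (indicator {0<..<a} r * (r * \<bar>ln \<bar>r^2 - d^2\<bar>\<bar>)) \<le> M r" for r
  proof (cases "r \<in> {0<..<a}")
    case True
    then have r: "0 < r" "r < a" by auto
    have "-a < r - d" "r - d < a" using r d by auto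
    then have ind: "indicator {-a<..<a} (-d + 1 * r) = (1::real)" "indicator {-a<..<a} r = (1::real)"
      using r a by (auto simp: indicator_def)
    have "r * \<bar>ln \<bar>r^2 - d^2\<bar>\<bar> \<le> a * (\<bar>ln \<bar>r - d\<bar>\<bar> + \<bar>ln \<bar>r\<bar>\<bar> + \<bar>ln (2 * a)\<bar>)"
      using ln_sum_bound[OF r d] r by (intro mult_mono) auto
    then show ?thesis using True ind r by (simp add: M_def abs_mult)
  next
    case False
    have "0 \<le> M r" unfolding M_def using a by (intro mult_nonneg_nonneg add_nonneg_nonneg) auto
    then show ?thesis using False by simp
  qed
  show i: "integrable lborel (\<lambda>r. indicator {0<..<a} r * (r * \<bar>ln \<bar>r^2 - d^2\<bar>\<bar>))"
  proof (rule Bochner_Integration.integrable_bound[OF Mi])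
    show "AE x in lborel. norm (indicator {0<..<a} x * (x * \<bar>ln \<bar>x^2 - d^2\<bar>\<bar>)) \<le> norm (M x)"
      using order_trans[OF bound abs_ge_self] by auto
  qed auto
  have "(LINT r|lborel. indicator {0<..<a} r * (r * \<bar>ln \<bar>r^2 - d^2\<bar>\<bar>)) \<le> (LINT r|lborel. M r)"
    using i Mi bound by (intro integral_mono) (auto intro: order_trans[OF abs_ge_self])
  then show "(LINT r|lborel. indicator {0<..<a} r * (r * \<bar>ln \<bar>r^2 - d^2\<bar>\<bar>)) \<le> Kb a" using MI by simp
qed

lemma LBINT_ind: "(a::real) \<le> b \<Longrightarrow> (LBINT x=a..b. g x) = (LINT x|lborel. indicator {a<..<b} x * (g x :: real))"
  by (simp add: interval_lebesgue_integral_def set_lebesgue_integral_def)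

lemma LBINT_ind0: "0 \<le> (b::real) \<Longrightarrow> (LBINT x=0..b. g x) = (LINT x|lborel. indicator {0<..<b} x * (g x :: real))"
  using LBINT_ind[of 0 b g] by (simp add: zero_ereal_def)

lemma norm_circ_scale: "0 \<le> r \<Longrightarrow> norm (r *\<^sub>R circ s) = r"
  by simp

locale fsetup =
  fixes R :: real and f :: "real^2 \<Rightarrow> real" and C :: real
  assumes R: "R > 0"
    and fc: "continuous_on UNIV f"
    and fz: "\<And>y. R \<le> norm y \<Longrightarrow> f y = 0"
    and fC: "\<And>y. \<bar>f y\<bar> \<le> C"
begin

lemma fmeas [measurable]: "f \<in> borel_measurable borel"
  using fc by (rule borel_measurable_continuous_onI)

lemma C0: "0 \<le> C" using fC[of 0] by linarith

definition FA :: "real^2 \<Rightarrow> real \<Rightarrow> real^2 \<Rightarrow> real" where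
  "FA c d y = f y * ln \<bar>(norm (c - y))^2 - d^2\<bar>"

lemma FA_meas [measurable]: "FA c d \<in> borel_measurable borel"
  unfolding FA_def[abs_def] by measurable

lemma Pc_FA:
  assumes c: "norm c \<le> R"
  shows "Pc c (FA c d) p = indicator {0<..<2*R} (fst p) * indicator {0<..<2*pi} (snd p)
     * (fst p * ln \<bar>(fst p)^2 - d^2\<bar> * f (c - fst p *\<^sub>R circ (snd p)))"
proof (cases p)
  case (Pair r s)
  show ?thesis
  proof (cases "0 < r \<and> r < 2 * R")
    case True
    then show ?thesis using Pair by (simp add: Pc_def FA_def indicator_def)
  next
    case False
    show ?thesis
    proof (cases "0 < r")
      case True
      then have "2 * R \<le> r" using False by simp
      have "norm (r *\<^sub>R circ s) - norm c \<le> norm (c - r *\<^sub>R circ s)"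
        by (metis norm_minus_commute norm_triangle_ineq2)
      then have "R \<le> norm (c - r *\<^sub>R circ s)" using \<open>2 * R \<le> r\<close> c True by simp
      then show ?thesis using Pair False by (simp add: Pc_def FA_def fz indicator_def)
    next
      case False
      then show ?thesis using Pair by (simp add: Pc_def indicator_def)
    qed
  qed
qed

definition ga :: "real \<Rightarrow> real \<Rightarrow> real" where
  "ga d r = C * (indicator {0<..<2*R} r * (r * \<bar>ln \<bar>r^2 - d^2\<bar>\<bar>))"

lemma ga_int: "0 \<le> d \<Longrightarrow> d \<le> 2 * R \<Longrightarrow> integrable lborel (ga d)"
  unfolding ga_def using LOGT(1)[of "2*R" d] R by simp

lemma ga_le: "0 \<le> d \<Longrightarrow> d \<le> 2 * R \<Longrightarrow> (LINT r|lborel. ga d r) \<le> C * Kb (2*R)"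
  unfolding ga_def using LOGT[of "2*R" d] R C0 by (simp add: mult_left_mono)

lemma ind2pi_int: "integrable lborel (indicat_real {0<..<2*pi})"
  by (intro integrable_real_indicator) auto

lemma Pc_FA_bound:
  assumes c: "norm c \<le> R"
  shows "\<bar>Pc c (FA c d) p\<bar> \<le> ga d (fst p) * indicator {0<..<2*pi} (snd p)"
proof -
  have "\<bar>Pc c (FA c d) p\<bar> = indicator {0<..<2*R} (fst p) * indicator {0<..<2*pi} (snd p)
     * (\<bar>fst p\<bar> * \<bar>ln \<bar>(fst p)^2 - d^2\<bar>\<bar> * \<bar>f (c - fst p *\<^sub>R circ (snd p))\<bar>)"
    by (simp add: Pc_FA[OF c] abs_mult)
  also have "\<dots> \<le> indicator {0<..<2*R} (fst p) * indicator {0<..<2*pi} (snd p)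
     * (\<bar>fst p\<bar> * \<bar>ln \<bar>(fst p)^2 - d^2\<bar>\<bar> * C)"
    by (intro mult_left_mono fC) auto
  also have "\<dots> = ga d (fst p) * indicator {0<..<2*pi} (snd p)"
    by (simp add: ga_def indicator_def)
  finally show ?thesis .
qed

lemma stepA:
  assumes c: "norm c \<le> R" and d: "0 \<le> d" "d \<le> 2 * R"
  shows "integrable lborel (FA c d)"
    and "(LINT y|lborel. FA c d y) = (LINT r|lborel. indicator {0<..<2*R} r * (r * ln \<bar>r^2 - d^2\<bar>
          * (LINT s|lborel. indicator {0<..<2*pi} s * f (c - r *\<^sub>R circ s))))"
    and "(LINT y|lborel. \<bar>FA c d y\<bar>) \<le> C * Kb (2*R) * (2 * pi)"
proof -
  have pm [measurable]: "Pc c (FA c d) \<in> borel_measurable (lborel \<Otimes>\<^sub>M lborel)"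
    unfolding Pc_def[abs_def] by measurable
  have maj: "integrable (lborel \<Otimes>\<^sub>M lborel) (\<lambda>p. ga d (fst p) * indicator {0<..<2*pi} (snd p))"
    using prod_int(1)[OF ga_int[OF d] ind2pi_int] .
  have pint: "integrable (lborel \<Otimes>\<^sub>M lborel) (Pc c (FA c d))"
  proof (rule Bochner_Integration.integrable_bound[OF maj])
    show "AE p in lborel \<Otimes>\<^sub>M lborel. norm (Pc c (FA c d) p) \<le> norm (ga d (fst p) * indicator {0<..<2*pi} (snd p))"
    proof (rule AE_I2)
      fix p
      show "norm (Pc c (FA c d) p) \<le> norm (ga d (fst p) * indicator {0<..<2*pi} (snd p))"
        using order_trans[OF Pc_FA_bound[OF c, of d p] abs_ge_self] by simp
    qed
  qed simp
  show i: "integrable lborel (FA c d)" using polar_center(1)[OF FA_meas] pint by simp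
  have "(LINT y|lborel. FA c d y) = (LINT p|(lborel \<Otimes>\<^sub>M lborel). Pc c (FA c d) p)"
    using polar_center(2)[OF FA_meas i] .
  also have "\<dots> = (LINT r|lborel. LINT s|lborel. Pc c (FA c d) (r, s))"
    using lborel_pair.integral_fst'[OF pint] by simp
  also have "\<dots> = (LINT r|lborel. indicator {0<..<2*R} r * (r * ln \<bar>r^2 - d^2\<bar>
          * (LINT s|lborel. indicator {0<..<2*pi} s * f (c - r *\<^sub>R circ s))))"
  proof (intro Bochner_Integration.integral_cong refl)
    fix r
    have "(LINT s|lborel. Pc c (FA c d) (r, s)) = (LINT s|lborel. (indicator {0<..<2*R} r * (r * ln \<bar>r^2 - d^2\<bar>))
          * (indicator {0<..<2*pi} s * f (c - r *\<^sub>R circ s)))"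
      by (intro Bochner_Integration.integral_cong refl) (simp add: Pc_FA[OF c])
    also have "\<dots> = indicator {0<..<2*R} r * (r * ln \<bar>r^2 - d^2\<bar>
          * (LINT s|lborel. indicator {0<..<2*pi} s * f (c - r *\<^sub>R circ s)))"
      by simp
    finally show "(LINT s|lborel. Pc c (FA c d) (r, s)) = indicator {0<..<2*R} r * (r * ln \<bar>r^2 - d^2\<bar>
          * (LINT s|lborel. indicator {0<..<2*pi} s * f (c - r *\<^sub>R circ s)))" .
  qed
  finally show "(LINT y|lborel. FA c d y) = (LINT r|lborel. indicator {0<..<2*R} r * (r * ln \<bar>r^2 - d^2\<bar>
          * (LINT s|lborel. indicator {0<..<2*pi} s * f (c - r *\<^sub>R circ s))))" .
  have am [measurable]: "(\<lambda>y. \<bar>FA c d y\<bar>) \<in> borel_measurable borel" by measurable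
  have eqa: "Pc c (\<lambda>y. \<bar>FA c d y\<bar>) = (\<lambda>p. \<bar>Pc c (FA c d) p\<bar>)"
    by (auto simp: Pc_def fun_eq_iff abs_mult indicator_def)
  have ia: "integrable lborel (\<lambda>y. \<bar>FA c d y\<bar>)" using i by simp
  have "(LINT y|lborel. \<bar>FA c d y\<bar>) = (LINT p|(lborel \<Otimes>\<^sub>M lborel). \<bar>Pc c (FA c d) p\<bar>)"
    using polar_center(2)[OF am ia, of c] eqa by simp
  also have "\<dots> \<le> (LINT p|(lborel \<Otimes>\<^sub>M lborel). ga d (fst p) * indicator {0<..<2*pi} (snd p))"
    using pint maj Pc_FA_bound[OF c] by (intro integral_mono) auto
  also have "\<dots> = (LINT r|lborel. ga d r) * (LINT s|lborel. indicat_real {0<..<2*pi} s)"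
    using prod_int(2)[OF ga_int[OF d] ind2pi_int] .
  also have "\<dots> \<le> C * Kb (2*R) * (2 * pi)"
    using ga_le[OF d] by simp
  finally show "(LINT y|lborel. \<bar>FA c d y\<bar>) \<le> C * Kb (2*R) * (2 * pi)" .
qed

end

context fsetup
begin

definition xi :: "real \<Rightarrow> real^2" where "xi s = R *\<^sub>R circ s"

lemma norm_xi: "norm (xi s) = R" using R by (simp add: xi_def)

lemma xi_meas [measurable]: "xi \<in> borel_measurable borel"
  unfolding xi_def[abs_def] by measurable

lemma dd_bounds: assumes x: "norm x < R" shows "0 \<le> norm (x - xi s)" "norm (x - xi s) \<le> 2 * R"
proof -
  show "0 \<le> norm (x - xi s)" by simp
  have "norm (x - xi s) \<le> norm x + norm (xi s)" by (rule norm_triangle_ineq4)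
  then show "norm (x - xi s) \<le> 2 * R" using x norm_xi[of s] by simp
qed

lemma J_eq:
  assumes x: "norm x < R"
  shows "(LBINT t=0..2*R. sph_mean f (xi s) t * ln \<bar>t\<^sup>2 - (norm (x - xi s))\<^sup>2\<bar> * t)
       = (1 / (2*pi)) * (LINT z|lborel. FA (xi s) (norm (x - xi s)) z)"
proof -
  let ?d = "norm (x - xi s)"
  have "(LBINT t=0..2*R. sph_mean f (xi s) t * ln \<bar>t\<^sup>2 - ?d\<^sup>2\<bar> * t)
      = (LINT t|lborel. indicator {0<..<2*R} t * (sph_mean f (xi s) t * ln \<bar>t\<^sup>2 - ?d\<^sup>2\<bar> * t))"
    using R by (simp add: LBINT_ind0)
  also have "\<dots> = (LINT t|lborel. (1 / (2*pi)) * (indicator {0<..<2*R} t * (t * ln \<bar>t^2 - ?d^2\<bar>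
          * (LINT s'|lborel. indicator {0<..<2*pi} s' * f (xi s - t *\<^sub>R circ s')))))"
    by (intro Bochner_Integration.integral_cong refl) (simp add: sph_mean_def LBINT_ind0)
  also have "\<dots> = (1 / (2*pi)) * (LINT t|lborel. indicator {0<..<2*R} t * (t * ln \<bar>t^2 - ?d^2\<bar>
          * (LINT s'|lborel. indicator {0<..<2*pi} s' * f (xi s - t *\<^sub>R circ s'))))"
    by (rule integral_mult_right_zero)
  also have "\<dots> = (1 / (2*pi)) * (LINT z|lborel. FA (xi s) ?d z)"
    using stepA(2)[of "xi s" ?d] norm_xi[of s] dd_bounds[OF x, of s] by simp
  finally show ?thesis .
qed

definition H :: "real^2 \<Rightarrow> real \<times> (real^2) \<Rightarrow> real" where
  "H x p = indicator {0<..<2*pi} (fst p) * FA (xi (fst p)) (norm (x - xi (fst p))) (snd p)"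

lemma H_meas [measurable]: "H x \<in> borel_measurable (lborel \<Otimes>\<^sub>M lborel)"
  unfolding H_def[abs_def] FA_def by measurable

lemma H_int:
  assumes x: "norm x < R"
  shows "integrable (lborel \<Otimes>\<^sub>M lborel) (H x)"
proof (rule lborel_pair.Fubini_integrable)
  show "H x \<in> borel_measurable (lborel \<Otimes>\<^sub>M lborel)" by (rule H_meas)
  show "AE s in lborel. integrable lborel (\<lambda>z. H x (s, z))"
  proof (rule AE_I2)
    fix s
    have "integrable lborel (FA (xi s) (norm (x - xi s)))"
      using stepA(1)[of "xi s" "norm (x - xi s)"] norm_xi[of s] dd_bounds[OF x, of s] by simp
    then show "integrable lborel (\<lambda>z. H x (s, z))"
      by (simp add: H_def)
  qed
  define K where "K = C * Kb (2*R) * (2 * pi)"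
  have maj: "integrable lborel (\<lambda>s. indicator {0<..<2*pi} s * K)"
    using ind2pi_int by simp
  have bnd: "\<bar>LINT z|lborel. norm (H x (s, z))\<bar> \<le> \<bar>indicator {0<..<2*pi} s * K\<bar>" for s
  proof -
    have "(LINT z|lborel. norm (H x (s, z))) = indicator {0<..<2*pi} s * (LINT z|lborel. \<bar>FA (xi s) (norm (x - xi s)) z\<bar>)"
      by (simp add: H_def abs_mult)
    moreover have "0 \<le> (LINT z|lborel. \<bar>FA (xi s) (norm (x - xi s)) z\<bar>)" by simp
    moreover have "(LINT z|lborel. \<bar>FA (xi s) (norm (x - xi s)) z\<bar>) \<le> K"
      using stepA(3)[of "xi s" "norm (x - xi s)"] norm_xi[of s] dd_bounds[OF x, of s] by (simp add: K_def)
    ultimately show ?thesis by (auto simp: indicator_def)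
  qed
  show "integrable lborel (\<lambda>s. LINT z|lborel. norm (H x (s, z)))"
  proof (rule Bochner_Integration.integrable_bound[OF maj])
    show "AE s in lborel. norm (LINT z|lborel. norm (H x (s, z))) \<le> norm (indicator {0<..<2*pi} s * K)"
      using bnd by simp
  qed measurable
qed

lemma f_int: "integrable lborel f"
proof -
  have "integrable lborel (\<lambda>y. indicator (cball 0 R) y *\<^sub>R f y)"
    by (rule borel_integrable_compact) (auto intro: continuous_on_subset[OF fc])
  then show ?thesis
    by (rule int_eq) (auto simp: indicator_def fz)
qed

lemma inner_s:
  assumes x: "norm x < R" and zx: "z \<noteq> x"
  shows "(LINT s|lborel. H x (s, z)) = 2 * pi * (ln R * f z + (1/2) * FA x 0 z)"
proof -
  have "(LINT s|lborel. H x (s, z)) = (LINT s|lborel. f z * (indicator {0<..<2*pi} s *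
      ln \<bar>(norm (R *\<^sub>R circ s - z))\<^sup>2 - (norm (x - R *\<^sub>R circ s))\<^sup>2\<bar>))"
    by (intro Bochner_Integration.integral_cong refl) (simp add: H_def FA_def xi_def)
  also have "\<dots> = f z * (LINT s|lborel. indicator {0<..<2*pi} s *
      ln \<bar>(norm (R *\<^sub>R circ s - z))\<^sup>2 - (norm (x - R *\<^sub>R circ s))\<^sup>2\<bar>)"
    by (rule integral_mult_right_zero)
  also have "\<dots> = 2 * pi * (ln R * f z + (1/2) * FA x 0 z)"
  proof (cases "norm z < R")
    case True
    have "norm (x - z) > 0" using zx by simp
    then have l2: "ln ((norm (x - z))^2) = 2 * ln (norm (x - z))" by (simp add: ln_realpow)
    have "ln (R * norm (z - x)) = ln R + ln (norm (x - z))"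
      using R zx by (simp add: ln_mult norm_minus_commute)
    then show ?thesis using claimC[OF R True x zx] l2
      by (simp add: FA_def algebra_simps)
  next
    case False
    then show ?thesis by (simp add: fz FA_def)
  qed
  finally show ?thesis .
qed

lemma main_eq:
  assumes x: "norm x < R"
  shows "(1 / (2 * pi * R)) *
      (LBINT s=0..2*pi.
         (LBINT t=0..2*R. sph_mean f (R *\<^sub>R circ s) t
                            * ln \<bar>t\<^sup>2 - (norm (x - R *\<^sub>R circ s))\<^sup>2\<bar> * t) * R)
    - (ln R / (2 * pi)) * (LINT y:ball 0 R|lborel. f y) = log_pot R f x"
proof -
  define IF where "IF = (LINT z|lborel. FA x 0 z)"
  define If where "If = (LINT z|lborel. f z)"
  have FAi: "integrable lborel (FA x 0)"
    using stepA(1)[of x 0] x R by simp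
  have S1: "(LBINT s=0..2*pi.
         (LBINT t=0..2*R. sph_mean f (R *\<^sub>R circ s) t
                            * ln \<bar>t\<^sup>2 - (norm (x - R *\<^sub>R circ s))\<^sup>2\<bar> * t) * R)
      = (R / (2*pi)) * (LINT s|lborel. LINT z|lborel. H x (s, z))"
  proof -
    have "(LBINT s=0..2*pi.
         (LBINT t=0..2*R. sph_mean f (R *\<^sub>R circ s) t
                            * ln \<bar>t\<^sup>2 - (norm (x - R *\<^sub>R circ s))\<^sup>2\<bar> * t) * R)
      = (LINT s|lborel. indicator {0<..<2*pi} s * ((LBINT t=0..2*R. sph_mean f (R *\<^sub>R circ s) t
                            * ln \<bar>t\<^sup>2 - (norm (x - R *\<^sub>R circ s))\<^sup>2\<bar> * t) * R))"
      by (rule LBINT_ind0) simp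
    also have "\<dots> = (LINT s|lborel. (R / (2*pi)) * (LINT z|lborel. H x (s, z)))"
    proof (intro Bochner_Integration.integral_cong refl)
      fix s
      have "(LINT z|lborel. H x (s, z)) = indicator {0<..<2*pi} s * (LINT z|lborel. FA (xi s) (norm (x - xi s)) z)"
        unfolding H_def by simp
      then show "indicator {0<..<2*pi} s * ((LBINT t=0..2*R. sph_mean f (R *\<^sub>R circ s) t
                            * ln \<bar>t\<^sup>2 - (norm (x - R *\<^sub>R circ s))\<^sup>2\<bar> * t) * R)
           = (R / (2*pi)) * (LINT z|lborel. H x (s, z))"
        using J_eq[OF x, of s] by (simp add: xi_def)
    qed
    also have "\<dots> = (R / (2*pi)) * (LINT s|lborel. LINT z|lborel. H x (s, z))"
      by (rule integral_mult_right_zero)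
    finally show ?thesis .
  qed
  have S2: "(LINT s|lborel. LINT z|lborel. H x (s, z)) = (LINT z|lborel. LINT s|lborel. H x (s, z))"
  proof -
    have "integrable (lborel \<Otimes>\<^sub>M lborel) (case_prod (\<lambda>s z. H x (s, z)))"
      using H_int[OF x] by simp
    from lborel_pair.Fubini_integral[OF this] show ?thesis by simp
  qed
  have S3: "(LINT z|lborel. LINT s|lborel. H x (s, z)) = (LINT z|lborel. 2 * pi * (ln R * f z + (1/2) * FA x 0 z))"
  proof (rule integral_cong_AE)
    show "AE z in lborel. (LINT s|lborel. H x (s, z)) = 2 * pi * (ln R * f z + (1/2) * FA x 0 z)"
      using AE_lborel_singleton[of x] by eventually_elim (use inner_s[OF x] in auto)
  qed (simp_all add: FA_def)
  have S4: "(LINT z|lborel. 2 * pi * (ln R * f z + (1/2) * FA x 0 z)) = 2 * pi * (ln R * If + (1/2) * IF)"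
    using f_int FAi by (simp add: If_def IF_def)
  have S5: "(LINT y:ball 0 R|lborel. f y) = If"
    unfolding set_lebesgue_integral_def If_def
    by (intro Bochner_Integration.integral_cong refl) (auto simp: indicator_def fz)
  have S6: "log_pot R f x = (1 / (2*pi)) * ((1/2) * IF)"
  proof -
    have "(LINT y:ball 0 R|lborel. f y * ln (norm (x - y))) = (LINT y|lborel. (1/2) * FA x 0 y)"
      unfolding set_lebesgue_integral_def
    proof (intro Bochner_Integration.integral_cong refl)
      fix y
      show "indicator (ball 0 R) y *\<^sub>R (f y * ln (norm (x - y))) = (1/2) * FA x 0 y"
      proof (cases "y = x")
        case True then show ?thesis by (simp add: FA_def)
      next
        case False
        then have "norm (x - y) > 0" by simp
        then have "ln ((norm (x - y))^2) = 2 * ln (norm (x - y))" by (simp add: ln_realpow)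
        then show ?thesis by (auto simp: FA_def indicator_def fz)
      qed
    qed
    also have "\<dots> = (1/2) * IF" by (simp add: IF_def)
    finally have e: "(LINT y:ball 0 R|lborel. f y * ln (norm (x - y))) = (1/2) * IF" .
    show ?thesis unfolding log_pot_def e by simp
  qed
  show ?thesis
    unfolding S1 S2 S3 S4 S5 S6 using R pi_gt_zero
    by (simp add: field_simps)
qed

end

theorem lemma3p6:
  fixes R :: real and f :: "real^2 \<Rightarrow> real" and x :: "real^2"
  assumes "R > 0"
    and "smooth_fun f"
    and "closure {y. f y \<noteq> 0} \<subseteq> ball 0 R"
    and "x \<in> ball 0 R"
  shows "log_pot R f x =
    (1 / (2 * pi * R)) *
      (LBINT s=0..2*pi.
         (LBINT t=0..2*R. sph_mean f (R *\<^sub>R circ s) t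
                            * ln \<bar>t\<^sup>2 - (norm (x - R *\<^sub>R circ s))\<^sup>2\<bar> * t) * R)
    - (ln R / (2 * pi)) * (LINT y:ball 0 R|lborel. f y)"
proof -
  have fc: "continuous_on UNIV f"
    using assms(2) unfolding smooth_fun_def by (metis Ck.simps(1))
  have fz: "f y = 0" if "R \<le> norm y" for y
  proof (rule ccontr)
    assume "f y \<noteq> 0"
    then have "y \<in> closure {y. f y \<noteq> 0}" by (intro subsetD[OF closure_subset]) simp
    then have "y \<in> ball 0 R" by (rule subsetD[OF assms(3)])
    then show False using that by simp
  qed
  have "compact (f ` cball 0 R)"
    by (rule compact_continuous_image) (auto intro: continuous_on_subset[OF fc])
  then have "bounded (f ` cball 0 R)" by (rule compact_imp_bounded)
  then obtain a where a: "\<And>y. y \<in> cball 0 R \<Longrightarrow> norm (f y) \<le> a"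
    unfolding bounded_iff by blast
  have fC: "\<bar>f y\<bar> \<le> max a 0" for y
  proof (cases "y \<in> cball 0 R")
    case True then show ?thesis using a[of y] by simp
  next
    case False then have "R \<le> norm y" by simp
    then show ?thesis using fz by simp
  qed
  interpret fsetup R f "max a 0"
    using assms(1) fc fz fC by unfold_locales auto
  have "norm x < R" using assms(4) by simp
  from main_eq[OF this] show ?thesis by simp
qed

end
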